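(* Let $p\geq1$ and $A>0$. Let $\rho(\tau)$ be the covariance function of a centered stationary random process, and suppose $\rho$ is continuous and $\rho(T)\to0$ as $T\to\infty$. For $T>0$ and $\tau\in[0,A]$ put \[ \psi(T,\tau)=\frac{2}{T^2}\int_0^{T}(T-u)\bigl(\rho^2(u)+\rho(u+\tau)\rho(u-\tau)\bigr)\,du, \qquad C_p=C_p(T)=\int_0^{A}\bigl(\psi(T,\tau)\bigr)^{p/2}\,d\tau . \] Then $C_p\to0$ as $T\to\infty$.
   Context: The covariance function $\rho$ of a stationary process is an even function defined on all of $\mathbb{R}$. *)

theory Defs
  imports "HOL-Probability.Probability"
begin

definition psi :: "(real \<Rightarrow> real) \<Rightarrow> real \<Rightarrow> real \<Rightarrow> real" where
  "psi \<rho> T \<tau> = 2 / T\<^sup>2 * integral {0..T}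
      (\<lambda>u. (T - u) * ((\<rho> u)\<^sup>2 + \<rho> (u + \<tau>) * \<rho> (u - \<tau>)))"

definition C_p :: "(real \<Rightarrow> real) \<Rightarrow> real \<Rightarrow> real \<Rightarrow> real \<Rightarrow> real" where
  "C_p \<rho> p A T = integral {0..A} (\<lambda>\<tau>. (psi \<rho> T \<tau>) powr (p / 2))"

end

theory Submission
  imports Defs
begin

lemma powr_abs_real: "(x::real) powr a = \<bar>x\<bar> powr a"
  by (simp add: powr_def ln_real_def)

lemma psi_small:
  fixes \<rho> :: "real \<Rightarrow> real" and A \<epsilon> :: real
  assumes cont: "continuous_on UNIV \<rho>" and lim: "(\<rho> \<longlongrightarrow> 0) at_top"
    and A: "A > 0" and e: "\<epsilon> > 0"
  shows "\<forall>\<^sub>F T in at_top. \<forall>\<tau>\<in>{0..A}. \<bar>psi \<rho> T \<tau>\<bar> \<le> \<epsilon>"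
proof -
  obtain N0 where N0: "\<And>x. x \<ge> N0 \<Longrightarrow> \<bar>\<rho> x\<bar> \<le> 1"
    using lim[THEN tendstoD, of 1] by (force simp: eventually_at_top_linorder dist_real_def)
  have "bounded (\<rho> ` {-A..N0})"
    by (intro compact_imp_bounded compact_continuous_image continuous_on_subset[OF cont]) auto
  then obtain B' where B': "\<And>x. x \<in> {-A..N0} \<Longrightarrow> \<bar>\<rho> x\<bar> \<le> B'"
    unfolding bounded_iff by (metis image_eqI real_norm_def)
  define B where "B = max 1 B'"
  have Bpos: "B > 0" unfolding B_def by simp
  have Bb: "\<bar>\<rho> x\<bar> \<le> B" if "x \<ge> -A" for x
  proof (cases "x \<le> N0")
    case True then show ?thesis using B'[of x] that unfolding B_def by auto
  next
    case False then show ?thesis using N0[of x] unfolding B_def by auto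
  qed
  define d where "d = sqrt (\<epsilon> / 8)"
  have dpos: "d > 0" using e unfolding d_def by simp
  have d2: "2 * d\<^sup>2 = \<epsilon> / 4" using e unfolding d_def by simp
  obtain N where N: "\<And>x. x \<ge> N \<Longrightarrow> \<bar>\<rho> x\<bar> \<le> d"
    using lim[THEN tendstoD, OF dpos] by (force simp: eventually_at_top_linorder dist_real_def)
  define L where "L = max 0 (N + A)"
  have L0: "L \<ge> 0" unfolding L_def by simp
  show ?thesis
    unfolding eventually_at_top_linorder
  proof (intro exI[of _ "max (L + 1) (8 * B\<^sup>2 * L / \<epsilon> + 1)"] allI impI ballI)
    fix T \<tau> assume T: "T \<ge> max (L + 1) (8 * B\<^sup>2 * L / \<epsilon> + 1)" and tau: "\<tau> \<in> {0..A}"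
    have TL: "T \<ge> L + 1" and TB: "T \<ge> 8 * B\<^sup>2 * L / \<epsilon> + 1" using T by auto
    have Tpos: "T > 0" using TL L0 by linarith
    define f where "f = (\<lambda>u. (T - u) * ((\<rho> u)\<^sup>2 + \<rho> (u + \<tau>) * \<rho> (u - \<tau>)))"
    have fc: "continuous_on S f" for S
      unfolding f_def
      by (intro continuous_intros continuous_on_compose2[OF cont]) auto
    have gb: "\<bar>(\<rho> a)\<^sup>2 + \<rho> b * \<rho> c\<bar> \<le> 2 * K\<^sup>2"
      if "\<bar>\<rho> a\<bar> \<le> K" "\<bar>\<rho> b\<bar> \<le> K" "\<bar>\<rho> c\<bar> \<le> K" for a b c K
    proof -
      have "\<bar>(\<rho> a)\<^sup>2\<bar> \<le> K\<^sup>2"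
        using that(1) by (metis abs_ge_zero abs_power2 power2_abs power_mono)
      moreover have "\<bar>\<rho> b * \<rho> c\<bar> \<le> K * K"
        unfolding abs_mult using that(2,3) by (intro mult_mono) auto
      moreover have "\<bar>(\<rho> a)\<^sup>2 + \<rho> b * \<rho> c\<bar> \<le> \<bar>(\<rho> a)\<^sup>2\<bar> + \<bar>\<rho> b * \<rho> c\<bar>"
        by (rule abs_triangle_ineq)
      ultimately show ?thesis by (simp add: power2_eq_square)
    qed
    have fb1: "norm (f u) \<le> T * (2 * B\<^sup>2)" if "u \<in> {0..L}" for u
    proof -
      have "\<bar>(\<rho> u)\<^sup>2 + \<rho> (u + \<tau>) * \<rho> (u - \<tau>)\<bar> \<le> 2 * B\<^sup>2"
        using that tau A by (intro gb Bb) auto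
      moreover have "\<bar>T - u\<bar> \<le> T" using that TL L0 by auto
      ultimately show ?thesis unfolding f_def real_norm_def abs_mult
        by (intro mult_mono) auto
    qed
    have fb2: "norm (f u) \<le> T * (2 * d\<^sup>2)" if "u \<in> {L..T}" for u
    proof -
      have "\<bar>(\<rho> u)\<^sup>2 + \<rho> (u + \<tau>) * \<rho> (u - \<tau>)\<bar> \<le> 2 * d\<^sup>2"
        using that tau A unfolding L_def by (intro gb N) auto
      moreover have "\<bar>T - u\<bar> \<le> T" using that TL L0 by auto
      ultimately show ?thesis unfolding f_def real_norm_def abs_mult
        by (intro mult_mono) auto
    qed
    have fi: "f integrable_on {0..T}"
      by (intro integrable_continuous_interval fc)
    have spl: "integral {0..T} f = integral {0..L} f + integral {L..T} f"
      using Henstock_Kurzweil_Integration.integral_combine[of 0 L T f] fi L0 TL by simp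
    have i1: "norm (integral {0..L} f) \<le> T * (2 * B\<^sup>2) * (L - 0)"
      using L0 by (intro integral_bound fc fb1) auto
    have i2: "norm (integral {L..T} f) \<le> T * (2 * d\<^sup>2) * (T - L)"
      using TL by (intro integral_bound fc fb2) auto
    have "\<bar>integral {0..T} f\<bar> \<le> T * (2 * B\<^sup>2) * L + T * (\<epsilon> / 4) * T"
    proof -
      have "T * (2 * d\<^sup>2) * (T - L) \<le> T * (2 * d\<^sup>2) * T"
        using L0 Tpos dpos by (intro mult_left_mono) auto
      then show ?thesis using i1 i2 spl d2 by auto
    qed
    have "psi \<rho> T \<tau> = 2 / T\<^sup>2 * integral {0..T} f"
      unfolding psi_def f_def ..
    hence "\<bar>psi \<rho> T \<tau>\<bar> = 2 / T\<^sup>2 * \<bar>integral {0..T} f\<bar>" by (simp add: abs_mult)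
    also have "\<dots> \<le> 2 / T\<^sup>2 * (T * (2 * B\<^sup>2) * L + T * (\<epsilon> / 4) * T)"
      by (intro mult_left_mono \<open>\<bar>integral {0..T} f\<bar> \<le> _\<close>) auto
    also have "\<dots> = 4 * B\<^sup>2 * L / T + \<epsilon> / 2"
      using Tpos by (simp add: field_simps power2_eq_square)
    also have "\<dots> \<le> \<epsilon>"
    proof -
      have "8 * B\<^sup>2 * L \<le> \<epsilon> * T" using TB e
        by (simp add: field_simps)
      hence "4 * B\<^sup>2 * L / T \<le> \<epsilon> / 2" using Tpos by (simp add: field_simps)
      thus ?thesis by simp
    qed
    finally show "\<bar>psi \<rho> T \<tau>\<bar> \<le> \<epsilon>" .
  qed
qed

theorem theorem4:
  fixes M :: "'a measure" and X :: "real \<Rightarrow> 'a \<Rightarrow> real"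
    and \<rho> :: "real \<Rightarrow> real" and p A :: real
  assumes "p \<ge> 1" and "A > 0"
    and "prob_space M"
    and "\<And>t. X t \<in> borel_measurable M"
    and "\<And>t. integrable M (\<lambda>\<omega>. (X t \<omega>)\<^sup>2)"
    and "\<And>t. (\<integral>\<omega>. X t \<omega> \<partial>M) = 0"
    and "\<And>s t. (\<integral>\<omega>. X s \<omega> * X t \<omega> \<partial>M) = \<rho> (t - s)"
    and "continuous_on UNIV \<rho>"
    and "(\<rho> \<longlongrightarrow> 0) at_top"
  shows "((\<lambda>T. C_p \<rho> p A T) \<longlongrightarrow> 0) at_top"
proof (rule tendstoI)
  fix e :: real assume e: "e > 0"
  define \<epsilon> where "\<epsilon> = (e / (2 * A)) powr (2 / p)"
  have epos: "\<epsilon> > 0" using e \<open>A > 0\<close> unfolding \<epsilon>_def by simp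
  have epow: "\<epsilon> powr (p / 2) = e / (2 * A)"
    unfolding \<epsilon>_def using \<open>p \<ge> 1\<close> e \<open>A > 0\<close> by (simp add: powr_powr)
  show "\<forall>\<^sub>F T in at_top. dist (C_p \<rho> p A T) 0 < e"
    using psi_small[OF assms(8,9,2) epos]
  proof eventually_elim
    case (elim T)
    have bnd: "norm (psi \<rho> T \<tau> powr (p / 2)) \<le> e / (2 * A)" if "\<tau> \<in> cbox 0 A" for \<tau>
    proof -
      have "norm (psi \<rho> T \<tau> powr (p / 2)) = \<bar>psi \<rho> T \<tau>\<bar> powr (p / 2)"
        by (simp add: powr_abs_real[of "psi \<rho> T \<tau>"])
      also have "\<dots> \<le> \<epsilon> powr (p / 2)"
        using elim that \<open>p \<ge> 1\<close> by (intro powr_mono2) auto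
      finally show ?thesis using epow by simp
    qed
    have "\<bar>C_p \<rho> p A T\<bar> \<le> e / (2 * A) * A"
    proof (cases "(\<lambda>\<tau>. psi \<rho> T \<tau> powr (p / 2)) integrable_on {0..A}")
      case True
      then have "norm (C_p \<rho> p A T) \<le> e / (2 * A) * Henstock_Kurzweil_Integration.content (cbox 0 A)"
        unfolding C_p_def
        by (intro has_integral_bound[OF _ _ bnd]) (use e \<open>A > 0\<close> in auto)
      then show ?thesis using \<open>A > 0\<close> by simp
    next
      case False
      then show ?thesis unfolding C_p_def using e \<open>A > 0\<close>
        by (simp add: not_integrable_integral)
    qed
    also have "\<dots> < e" using e \<open>A > 0\<close> by simp
    finally show ?case by simp
  qed
qed

end
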